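(* Let $h\colon\{0,1\}^k\to\{0,1\}$ be a partial function, and let $\mathcal D_0,\mathcal D_1,\mathcal D_2$ be probability distributions over $h^{-1}(0)$, $h^{-1}(1)$, and $h^{-1}(0)\cup h^{-1}(1)$ respectively. Then for every $0<\varepsilon\le 1/10$ there exists a conjunction $C\colon\{0,1\}^k\to\{0,1\}$ of width $\mathsf{WAPP}_\varepsilon(h)$ such that $C(\mathcal D_0)\le\delta\cdot C(\mathcal D_1)$, $C(\mathcal D_2)\le(1+\delta)\cdot C(\mathcal D_1)$, and $C(\mathcal D_1)>0$, where $\delta=2\sqrt{\varepsilon}$.
   Context: A conjunction is an AND of literals; its width is its number of literals. For a conjunction $C$ and distribution $\mathcal D$, $C(\mathcal D)=\Pr_{x\sim\mathcal D}[C(x)=1]$. A randomized decision tree is a probability distribution over deterministic decision trees; its cost is the maximum depth of a tree in its support. $\mathsf{WAPP}_\varepsilon(h)$ is the minimum cost of a randomized decision tree with outputs in $\{0,1\}$ such that for some $t>0$, on every $x$ with $h(x)=1$ the probability of outputting $1$ lies in $[(1-\varepsilon)t,t]$, and on every $x$ with $h(x)=0$ it lies in $[0,\varepsilon t]$. *)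

theory Defs
  imports "HOL-Probability.Probability"
begin

text \<open>Inputs in {0,1}^k are boolean lists of length k. A partial function
  h : {0,1}^k -> {0,1} is a map bool list => bool option (only lists of length k matter;
  h x = None means x is outside the domain).\<close>

datatype dtree = Leaf bool | Query nat dtree dtree

fun dt_eval :: "dtree \<Rightarrow> bool list \<Rightarrow> bool" where
  "dt_eval (Leaf b) x = b"
| "dt_eval (Query i t0 t1) x = (if x ! i then dt_eval t1 x else dt_eval t0 x)"

fun dt_depth :: "dtree \<Rightarrow> nat" where
  "dt_depth (Leaf b) = 0"
| "dt_depth (Query i t0 t1) = Suc (max (dt_depth t0) (dt_depth t1))"

fun dt_valid :: "nat \<Rightarrow> dtree \<Rightarrow> bool" where
  "dt_valid k (Leaf b) = True"
| "dt_valid k (Query i t0 t1) = (i < k \<and> dt_valid k t0 \<and> dt_valid k t1)"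

definition rdt_prob1 :: "dtree pmf \<Rightarrow> bool list \<Rightarrow> real" where
  "rdt_prob1 R x = measure_pmf.prob R {T. dt_eval T x}"

definition rdt_cost_le :: "nat \<Rightarrow> dtree pmf \<Rightarrow> nat \<Rightarrow> bool" where
  "rdt_cost_le k R d = (\<forall>T\<in>set_pmf R. dt_valid k T \<and> dt_depth T \<le> d)"

definition wapp_computes :: "nat \<Rightarrow> real \<Rightarrow> (bool list \<Rightarrow> bool option) \<Rightarrow> dtree pmf \<Rightarrow> bool" where
  "wapp_computes k \<epsilon> h R = (\<exists>t::real. t > 0 \<and>
     (\<forall>x. length x = k \<and> h x = Some True \<longrightarrow>
          (1 - \<epsilon>) * t \<le> rdt_prob1 R x \<and> rdt_prob1 R x \<le> t) \<and>
     (\<forall>x. length x = k \<and> h x = Some False \<longrightarrow>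
          0 \<le> rdt_prob1 R x \<and> rdt_prob1 R x \<le> \<epsilon> * t))"

definition WAPP :: "nat \<Rightarrow> real \<Rightarrow> (bool list \<Rightarrow> bool option) \<Rightarrow> nat" where
  "WAPP k \<epsilon> h = (LEAST d. \<exists>R. rdt_cost_le k R d \<and> wapp_computes k \<epsilon> h R)"

text \<open>A conjunction is a finite set of literals (i, b), meaning "x_i = b", over indices < k;
  its width is the number of literals.\<close>
definition conj_eval :: "(nat \<times> bool) set \<Rightarrow> bool list \<Rightarrow> bool" where
  "conj_eval L x = (\<forall>(i, b)\<in>L. x ! i = b)"

definition conj_prob :: "(nat \<times> bool) set \<Rightarrow> bool list pmf \<Rightarrow> real" where
  "conj_prob L D = measure_pmf.prob D {x. conj_eval L x}"

end

theory Submission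
  imports Defs
begin
lemma finite_len: "finite {x::bool list. length x = k}"
  using finite_lists_length_eq[of "UNIV::bool set" k] by simp

lemma prob_finite_sum:
  assumes "finite S" "set_pmf p \<subseteq> S"
  shows "measure_pmf.prob p {x. P x} = (\<Sum>x\<in>S. pmf p x * (if P x then 1 else 0))"
proof -
  have "measure_pmf.prob p {x. P x} = measure_pmf.prob p ({x. P x} \<inter> S)"
  proof -
    have "{x. P x} \<inter> S \<inter> set_pmf p = {x. P x} \<inter> set_pmf p" using assms(2) by blast
    then show ?thesis by (metis measure_Int_set_pmf)
  qed
  also have "\<dots> = sum (pmf p) ({x. P x} \<inter> S)"
    using assms(1) by (simp add: measure_measure_pmf_finite)
  also have "\<dots> = (\<Sum>x\<in>S. if P x then pmf p x else 0)"
    using assms(1) by (simp add: sum.inter_restrict Int_commute)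
  also have "\<dots> = (\<Sum>x\<in>S. pmf p x * (if P x then 1 else 0))"
    by (rule sum.cong) auto
  finally show ?thesis .
qed

lemma finite_trees: "finite {T. dt_valid k T \<and> dt_depth T \<le> n}"
proof (induction n)
  case 0
  have "{T. dt_valid k T \<and> dt_depth T \<le> 0} \<subseteq> {Leaf True, Leaf False}"
  proof
    fix T assume "T \<in> {T. dt_valid k T \<and> dt_depth T \<le> 0}"
    then show "T \<in> {Leaf True, Leaf False}" by (cases T) auto
  qed
  then show ?case using finite_subset by blast
next
  case (Suc n)
  let ?S = "{T. dt_valid k T \<and> dt_depth T \<le> n}"
  have "{T. dt_valid k T \<and> dt_depth T \<le> Suc n} \<subseteq> {Leaf True, Leaf False} \<union>
     (\<lambda>(i,a,b). Query i a b) ` ({..<k} \<times> ?S \<times> ?S)"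
  proof
    fix T assume "T \<in> {T. dt_valid k T \<and> dt_depth T \<le> Suc n}"
    then show "T \<in> {Leaf True, Leaf False} \<union> (\<lambda>(i,a,b). Query i a b) ` ({..<k} \<times> ?S \<times> ?S)"
      by (cases T) (auto simp: image_iff)
  qed
  moreover have "finite ({Leaf True, Leaf False} \<union> (\<lambda>(i,a,b). Query i a b) ` ({..<k} \<times> ?S \<times> ?S))"
    using Suc by auto
  ultimately show ?case using finite_subset by blast
qed

fun bt :: "nat \<Rightarrow> bool list \<Rightarrow> (bool list \<Rightarrow> bool) \<Rightarrow> dtree" where
  "bt 0 p g = Leaf (g p)"
| "bt (Suc n) p g = Query (length p) (bt n (p @ [False]) g) (bt n (p @ [True]) g)"

lemma bt_eval: "length x = length p + n \<Longrightarrow> take (length p) x = p \<Longrightarrow> dt_eval (bt n p g) x = g x"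
proof (induction n arbitrary: p)
  case 0
  then show ?case by simp
next
  case (Suc n)
  have lt: "length p < length x" using Suc.prems by simp
  have tk: "take (Suc (length p)) x = p @ [x ! length p]"
    using Suc.prems(2) lt by (simp add: take_Suc_conv_app_nth)
  show ?case
  proof (cases "x ! length p")
    case True
    then show ?thesis using Suc.IH[of "p @ [True]"] Suc.prems tk by simp
  next
    case False
    then show ?thesis using Suc.IH[of "p @ [False]"] Suc.prems tk by simp
  qed
qed

lemma bt_depth: "dt_depth (bt n p g) = n"
  by (induction n arbitrary: p) auto

lemma bt_valid: "length p + n \<le> k \<Longrightarrow> dt_valid k (bt n p g)"
  by (induction n arbitrary: p) auto

lemma rdt_prob1_return: "rdt_prob1 (return_pmf T) x = (if dt_eval T x then 1 else 0)"
  by (simp add: rdt_prob1_def)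

lemma wapp_exists: assumes "0 \<le> \<epsilon>" "\<epsilon> \<le> 1"
  shows "\<exists>R. rdt_cost_le k R k \<and> wapp_computes k \<epsilon> h R"
proof -
  let ?T = "bt k [] (\<lambda>x. h x = Some True)"
  have ev: "length x = k \<Longrightarrow> dt_eval ?T x = (h x = Some True)" for x
    using bt_eval[of x "[]" k] by simp
  have "rdt_cost_le k (return_pmf ?T) k"
    by (simp add: rdt_cost_le_def bt_depth bt_valid)
  moreover have "wapp_computes k \<epsilon> h (return_pmf ?T)"
    unfolding wapp_computes_def
    by (rule exI[of _ 1]) (auto simp: rdt_prob1_return ev assms)
  ultimately show ?thesis by blast
qed

fun pv :: "dtree \<Rightarrow> bool list \<Rightarrow> nat set" where
  "pv (Leaf b) x = {}"
| "pv (Query i t0 t1) x = insert i (pv (if x ! i then t1 else t0) x)"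

lemma pv_agree: "(\<forall>i\<in>pv T x. y ! i = x ! i) \<Longrightarrow> pv T y = pv T x \<and> dt_eval T y = dt_eval T x"
  by (induction T) auto

lemma pv_finite: "finite (pv T x)"
  by (induction T) auto

lemma pv_card: "card (pv T x) \<le> dt_depth T"
proof (induction T)
  case (Leaf b) then show ?case by simp
next
  case (Query i t0 t1)
  have "card (pv (Query i t0 t1) x) \<le> Suc (card (pv (if x ! i then t1 else t0) x))"
    by (simp add: card_insert_le_m1 pv_finite card_insert_if)
  then show ?case using Query by auto
qed

lemma pv_sub: "dt_valid k T \<Longrightarrow> pv T x \<subseteq> {..<k}"
  by (induction T) auto

lemma pad_exists:
  assumes "S \<subseteq> {..<k}" "card S \<le> d" "d \<le> k"
  shows "\<exists>V. S \<subseteq> V \<and> V \<subseteq> {..<k} \<and> card V = d"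
proof -
  have fS: "finite S" using assms(1) finite_subset by blast
  have "d - card S \<le> card ({..<k} - S)"
    using assms fS by (simp add: card_Diff_subset)
  then obtain W where W: "W \<subseteq> {..<k} - S" "card W = d - card S" "finite W"
    by (rule obtain_subset_with_card_n)
  have "card (S \<union> W) = card S + card W"
    using W fS by (subst card_Un_disjoint) auto
  then show ?thesis using W assms by (intro exI[of _ "S \<union> W"]) auto
qed

lemma real_key:
  fixes s :: real assumes "0 < s" "s * s \<le> 1/10"
  shows "s / 2 + 1 / (1 + 2 * s) < 1 - s * s"
proof -
  have s2: "s < 1/2"
  proof (rule ccontr)
    assume "\<not> s < 1/2" then have "s \<ge> 1/2" by simp
    then have "s * s \<ge> 1/2 * (1/2)" using mult_mono[of "1/2" s "1/2" s] by simp
    then show False using assms by simp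
  qed
  have p: "0 < 1 + 2 * s" using assms by simp
  have "s * (3/2 - 2 * s - 2 * s * s) > 0"
  proof -
    have "s * s < 1/4" using assms by simp
    then have "3/2 - 2 * s - 2 * s * s > 0" using s2 by simp
    then show ?thesis using assms by simp
  qed
  then have "1 < (1 - s * s - s/2) * (1 + 2 * s)" by (simp add: algebra_simps)
  then have "1/(1+2 * s) < 1 - s * s - s/2" using p by (simp add: divide_less_eq)
  then show ?thesis by simp
qed

theorem fact3p1:
  fixes k :: nat and h :: "bool list \<Rightarrow> bool option"
    and D0 D1 D2 :: "bool list pmf" and \<epsilon> :: real
  assumes "set_pmf D0 \<subseteq> {x. length x = k \<and> h x = Some False}"
    and "set_pmf D1 \<subseteq> {x. length x = k \<and> h x = Some True}"
    and "set_pmf D2 \<subseteq> {x. length x = k \<and> h x \<noteq> None}"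
    and "0 < \<epsilon>" and "\<epsilon> \<le> 1/10"
  shows "\<exists>L. finite L \<and> (\<forall>(i, b)\<in>L. i < k) \<and> card L = WAPP k \<epsilon> h \<and>
           conj_prob L D0 \<le> (2 * sqrt \<epsilon>) * conj_prob L D1 \<and>
           conj_prob L D2 \<le> (1 + 2 * sqrt \<epsilon>) * conj_prob L D1 \<and>
           conj_prob L D1 > 0"
proof (rule ccontr)
  assume nthesis: "\<not> ?thesis"
  define d where "d = WAPP k \<epsilon> h"
  define s where "s = sqrt \<epsilon>"
  have s0: "0 < s" using assms(4) by (simp add: s_def)
  have ss: "s * s = \<epsilon>" using assms(4) by (simp add: s_def)
  have ex: "\<exists>R. rdt_cost_le k R k \<and> wapp_computes k \<epsilon> h R"
    using wapp_exists assms(4,5) by simp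
  then have "\<exists>R. rdt_cost_le k R d \<and> wapp_computes k \<epsilon> h R"
    unfolding d_def WAPP_def
    using LeastI[of "\<lambda>d. \<exists>R. rdt_cost_le k R d \<and> wapp_computes k \<epsilon> h R" k, OF ex] by simp
  then obtain R where cost: "rdt_cost_le k R d" and wc: "wapp_computes k \<epsilon> h R" by blast
  have dk: "d \<le> k" unfolding d_def WAPP_def
    using Least_le[of "\<lambda>d. \<exists>R. rdt_cost_le k R d \<and> wapp_computes k \<epsilon> h R" k, OF ex] by simp
  obtain t where t0: "t > 0"
    and tT: "\<And>x. length x = k \<Longrightarrow> h x = Some True \<Longrightarrow> (1 - \<epsilon>) * t \<le> rdt_prob1 R x \<and> rdt_prob1 R x \<le> t"
    and tF: "\<And>x. length x = k \<Longrightarrow> h x = Some False \<Longrightarrow> 0 \<le> rdt_prob1 R x \<and> rdt_prob1 R x \<le> \<epsilon> * t"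
    using wc unfolding wapp_computes_def by blast
  define X where "X = {x::bool list. length x = k}"
  have fX: "finite X" unfolding X_def by (rule finite_len)
  define F where "F = set_pmf R"
  have FT: "T \<in> F \<Longrightarrow> dt_valid k T \<and> dt_depth T \<le> d" for T
    using cost unfolding rdt_cost_le_def F_def by blast
  have fF: "finite F"
    using finite_subset[OF _ finite_trees[of k d]] FT by blast
  define Vf where "Vf = (\<lambda>S::nat set. SOME V. S \<subseteq> V \<and> V \<subseteq> {..<k} \<and> card V = d)"
  define Q where "Q = (\<lambda>T x. (\<lambda>i. (i, x ! i)) ` Vf (pv T x))"
  define A where "A = (\<lambda>T. (\<lambda>x. Q T x) ` {x\<in>X. dt_eval T x})"
  have Vp: "pv T x \<subseteq> Vf (pv T x) \<and> Vf (pv T x) \<subseteq> {..<k} \<and> card (Vf (pv T x)) = d"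
    if "T \<in> F" for T x
  proof -
    have "card (pv T x) \<le> d" using pv_card[of T x] FT[OF that] by simp
    moreover have "pv T x \<subseteq> {..<k}" using pv_sub FT[OF that] by blast
    ultimately have "\<exists>V. pv T x \<subseteq> V \<and> V \<subseteq> {..<k} \<and> card V = d"
      using pad_exists dk by blast
    then show ?thesis unfolding Vf_def by (rule someI_ex)
  qed
  have Lprops: "finite L \<and> (\<forall>(i, b)\<in>L. i < k) \<and> card L = d" if TF: "T \<in> F" and LA: "L \<in> A T" for T L
  proof -
    obtain x where L: "L = Q T x" using LA unfolding A_def by blast
    have fin: "finite (Vf (pv T x))" using Vp[OF TF, of x] finite_subset by blast
    have inj: "inj_on (\<lambda>i. (i, x ! i)) (Vf (pv T x))" by (auto simp: inj_on_def)
    show ?thesis using Vp[OF TF, of x] fin inj unfolding L Q_def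
      by (auto simp: card_image)
  qed
  have key: "Q T y = Q T x \<and> dt_eval T y = dt_eval T x"
    if "T \<in> F" "conj_eval (Q T x) y" for T x y
  proof -
    have agV: "\<forall>i\<in>Vf (pv T x). y ! i = x ! i"
      using that(2) unfolding conj_eval_def Q_def by auto
    then have "\<forall>i\<in>pv T x. y ! i = x ! i" using Vp[OF that(1), of x] by blast
    then have pe: "pv T y = pv T x \<and> dt_eval T y = dt_eval T x" by (rule pv_agree)
    have "Q T y = (\<lambda>i. (i, y ! i)) ` Vf (pv T x)" unfolding Q_def using pe by simp
    also have "\<dots> = Q T x" unfolding Q_def using agV by (intro image_cong) auto
    finally show ?thesis using pe by simp
  qed
  have selfQ: "conj_eval (Q T y) y" for T y
    unfolding conj_eval_def Q_def by auto
  have fA: "finite (A T)" for T unfolding A_def using fX by simp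
  have count: "(\<Sum>L\<in>A T. (if conj_eval L y then 1 else 0)) = (if dt_eval T y then 1 else (0::real))"
    if "T \<in> F" "y \<in> X" for T y
  proof -
    have "A T \<inter> {L. conj_eval L y} = (if dt_eval T y then {Q T y} else {})"
    proof (cases "dt_eval T y")
      case True
      have "A T \<inter> {L. conj_eval L y} \<subseteq> {Q T y}"
        unfolding A_def using key[OF that(1)] by force
      moreover have "Q T y \<in> A T \<inter> {L. conj_eval L y}"
        unfolding A_def using True that(2) selfQ by auto
      ultimately show ?thesis using True by auto
    next
      case False
      have "A T \<inter> {L. conj_eval L y} = {}"
        unfolding A_def using key[OF that(1)] False by force
      then show ?thesis using False by simp
    qed
    then show ?thesis by (simp add: sum.If_cases fA)
  qed
  have cpD: "conj_prob L D = (\<Sum>x\<in>X. pmf D x * (if conj_eval L x then 1 else 0))"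
    if "set_pmf D \<subseteq> X" for L D
    unfolding conj_prob_def using prob_finite_sum[OF fX that] by simp
  have rp: "rdt_prob1 R x = (\<Sum>T\<in>F. pmf R T * (if dt_eval T x then 1 else 0))" for x
    unfolding rdt_prob1_def using prob_finite_sum[OF fF, of R] F_def by simp
  have ident: "(\<Sum>x\<in>X. pmf D x * rdt_prob1 R x) = (\<Sum>T\<in>F. pmf R T * (\<Sum>L\<in>A T. conj_prob L D))"
    if DX: "set_pmf D \<subseteq> X" for D
  proof -
    have "(\<Sum>T\<in>F. pmf R T * (\<Sum>L\<in>A T. conj_prob L D))
       = (\<Sum>T\<in>F. pmf R T * (\<Sum>L\<in>A T. \<Sum>x\<in>X. pmf D x * (if conj_eval L x then 1 else 0)))"
      using cpD[OF DX] by simp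
    also have "\<dots> = (\<Sum>T\<in>F. pmf R T * (\<Sum>x\<in>X. pmf D x * (\<Sum>L\<in>A T. (if conj_eval L x then 1 else 0))))"
      by (simp add: sum_distrib_left sum.swap[where A="A _"])
    also have "\<dots> = (\<Sum>T\<in>F. pmf R T * (\<Sum>x\<in>X. pmf D x * (if dt_eval T x then 1 else 0)))"
      by (intro sum.cong refl arg_cong2[where f="(*)"]) (simp add: count)
    also have "\<dots> = (\<Sum>x\<in>X. pmf D x * (\<Sum>T\<in>F. pmf R T * (if dt_eval T x then 1 else 0)))"
      by (simp add: sum_distrib_left sum.swap[where A=F] mult.left_commute)
    also have "\<dots> = (\<Sum>x\<in>X. pmf D x * rdt_prob1 R x)" by (simp add: rp)
    finally show ?thesis by simp
  qed
  have D0X: "set_pmf D0 \<subseteq> X" and D1X: "set_pmf D1 \<subseteq> X" and D2X: "set_pmf D2 \<subseteq> X"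
    using assms(1-3) unfolding X_def by auto
  have avg: "(\<Sum>x\<in>X. pmf D x * c) = c" if "set_pmf D \<subseteq> X" for D and c :: real
    using sum_pmf_eq_1[OF fX that] by (simp add: sum_distrib_right[symmetric])
  define E where "E = (\<lambda>D. \<Sum>x\<in>X. pmf D x * rdt_prob1 R x)"
  have E1: "(1 - \<epsilon>) * t \<le> E D1"
  proof -
    have "(\<Sum>x\<in>X. pmf D1 x * ((1 - \<epsilon>) * t)) \<le> E D1" unfolding E_def
    proof (rule sum_mono)
      fix x assume "x \<in> X"
      show "pmf D1 x * ((1 - \<epsilon>) * t) \<le> pmf D1 x * rdt_prob1 R x"
      proof (cases "x \<in> set_pmf D1")
        case True then show ?thesis using assms(2) tT by (intro mult_left_mono) auto
      next
        case False then show ?thesis by (simp add: set_pmf_iff)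
      qed
    qed
    then show ?thesis using avg[OF D1X] by simp
  qed
  have E0: "E D0 \<le> \<epsilon> * t"
  proof -
    have "E D0 \<le> (\<Sum>x\<in>X. pmf D0 x * (\<epsilon> * t))" unfolding E_def
    proof (rule sum_mono)
      fix x assume "x \<in> X"
      show "pmf D0 x * rdt_prob1 R x \<le> pmf D0 x * (\<epsilon> * t)"
      proof (cases "x \<in> set_pmf D0")
        case True then show ?thesis using assms(1) tF by (intro mult_left_mono) auto
      next
        case False then show ?thesis by (simp add: set_pmf_iff)
      qed
    qed
    then show ?thesis using avg[OF D0X] by simp
  qed
  have E2: "E D2 \<le> t"
  proof -
    have "E D2 \<le> (\<Sum>x\<in>X. pmf D2 x * t)" unfolding E_def
    proof (rule sum_mono)
      fix x assume "x \<in> X"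
      show "pmf D2 x * rdt_prob1 R x \<le> pmf D2 x * t"
      proof (cases "x \<in> set_pmf D2")
        case True
        then have "length x = k" "h x = Some True \<or> h x = Some False" using assms(3) by auto
        moreover have "\<epsilon> * t \<le> t" using mult_right_mono[of \<epsilon> 1 t] assms(5) t0 by simp
        ultimately have "rdt_prob1 R x \<le> t"
          using tT[of x] tF[of x] by force
        then show ?thesis by (intro mult_left_mono) auto
      next
        case False then show ?thesis by (simp add: set_pmf_iff)
      qed
    qed
    then show ?thesis using avg[OF D2X] by simp
  qed
  define \<delta> where "\<delta> = 2 * s"
  have dpos: "0 < \<delta>" using s0 by (simp add: \<delta>_def)
  have bad: "conj_prob L D1 \<le> conj_prob L D0 / \<delta> + conj_prob L D2 / (1 + \<delta>)"
    if "T \<in> F" "L \<in> A T" for T L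
  proof -
    have nb: "\<not> (conj_prob L D0 \<le> \<delta> * conj_prob L D1 \<and>
           conj_prob L D2 \<le> (1 + \<delta>) * conj_prob L D1 \<and> conj_prob L D1 > 0)"
      using nthesis Lprops[OF that] unfolding \<delta>_def s_def d_def by blast
    have n0: "0 \<le> conj_prob L D0" "0 \<le> conj_prob L D2" "0 \<le> conj_prob L D1"
      unfolding conj_prob_def by auto
    have q0: "0 \<le> conj_prob L D0 / \<delta>" "0 \<le> conj_prob L D2 / (1 + \<delta>)"
      using n0 dpos by auto
    show ?thesis
    proof (cases "conj_prob L D1 > 0")
      case False then show ?thesis using n0 q0 by simp
    next
      case True
      then have "conj_prob L D0 > \<delta> * conj_prob L D1 \<or> conj_prob L D2 > (1 + \<delta>) * conj_prob L D1"
        using nb by auto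
      then show ?thesis
      proof
        assume "conj_prob L D0 > \<delta> * conj_prob L D1"
        then have "conj_prob L D1 < conj_prob L D0 / \<delta>" using dpos by (simp add: less_divide_eq mult.commute)
        then show ?thesis using q0 by simp
      next
        assume "conj_prob L D2 > (1 + \<delta>) * conj_prob L D1"
        then have "conj_prob L D1 < conj_prob L D2 / (1 + \<delta>)" using dpos by (simp add: less_divide_eq mult.commute)
        then show ?thesis using q0 by simp
      qed
    qed
  qed
  have "E D1 \<le> (\<Sum>T\<in>F. pmf R T * (\<Sum>L\<in>A T. conj_prob L D0 / \<delta> + conj_prob L D2 / (1 + \<delta>)))"
    unfolding E_def ident[OF D1X]
    by (intro sum_mono mult_left_mono) (auto intro: bad)
  also have "\<dots> = E D0 / \<delta> + E D2 / (1 + \<delta>)"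
    unfolding E_def ident[OF D0X] ident[OF D2X]
    by (simp add: sum.distrib sum_divide_distrib[symmetric] distrib_left times_divide_eq_right)
  also have "\<dots> \<le> \<epsilon> * t / \<delta> + t / (1 + \<delta>)"
    using E0 E2 dpos by (intro add_mono divide_right_mono) auto
  also have "\<dots> = (s / 2 + 1 / (1 + 2 * s)) * t"
    using s0 by (simp add: \<delta>_def ss[symmetric] field_simps)
  also have "\<dots> < (1 - s * s) * t"
    using real_key[OF s0] ss assms(5) t0 by (intro mult_strict_right_mono) auto
  finally show False using E1 ss by simp
qed

end
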